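(* Let $p\ge2$ be an integer, $R\ge1$, $A\in GL_r(\mathbb{C}((z)))$, $C,C'\in I+z^RM_r(\mathbb{C}[[z]])$ and $A_0,A_0'\in GL_r(\mathbb{C})$ with $$A_0=C(z/p)^{-1}A(z)C(z),\qquad A_0'=C'(z/p)^{-1}A(z)C'(z).$$ Then $A_0=A_0'$. If for no integer $i\ge R$ is $p^i$ an eigenvalue of the linear map $X\mapsto A_0^{-1}XA_0$ on $M_r(\mathbb{C})$, then $C=C'$. This last condition holds with $R=1$ if $A_0$ is $p$-restricted.
   Context: $A_0$ is $p$-restricted if all its eigenvalues $c$ satisfy $1\le|c|<p$. *)

theory Defs
  imports "HOL-Analysis.Analysis" "HOL-Computational_Algebra.Formal_Laurent_Series"
begin

definition mat_map :: "('a \<Rightarrow> 'b) \<Rightarrow> 'a^'n^'m \<Rightarrow> 'b^'n^'m" where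
  "mat_map f M = (\<chi> i j. f (M $ i $ j))"

(* substitution z \<mapsto> c z in a formal power series: f(cz) *)
definition fps_scale :: "complex \<Rightarrow> complex fps \<Rightarrow> complex fps" where
  "fps_scale c f = Abs_fps (\<lambda>n. c ^ n * fps_nth f n)"

definition in_I_plus_zR :: "nat \<Rightarrow> complex fps^'n^'n \<Rightarrow> bool" where
  "in_I_plus_zR R C \<longleftrightarrow> (\<forall>i j. \<forall>k<R. fps_nth ((C - mat 1) $ i $ j) k = 0)"

definition conj_map_eigenvalue :: "complex^'n^'n \<Rightarrow> complex \<Rightarrow> bool" where
  "conj_map_eigenvalue A0 c \<longleftrightarrow>
     (\<exists>X::complex^'n^'n. X \<noteq> 0 \<and> matrix_inv A0 ** X ** A0 = (\<chi> i j. c * X $ i $ j))"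

definition mat_eigenvalue :: "complex^'n^'n \<Rightarrow> complex \<Rightarrow> bool" where
  "mat_eigenvalue M c \<longleftrightarrow> (\<exists>v. v \<noteq> 0 \<and> M *v v = c *s v)"

definition p_restricted :: "nat \<Rightarrow> complex^'n^'n \<Rightarrow> bool" where
  "p_restricted p M \<longleftrightarrow> (\<forall>c. mat_eigenvalue M c \<longrightarrow> 1 \<le> cmod c \<and> cmod c < real p)"

end

theory Submission
  imports Defs "HOL-Computational_Algebra.Fundamental_Theorem_Algebra"
begin


definition cm :: "nat \<Rightarrow> complex fps^'n^'n \<Rightarrow> complex^'n^'n" where
  "cm k M = (\<chi> i j. fps_nth (M $ i $ j) k)"

lemma cm_eq_iff: "M = N \<longleftrightarrow> (\<forall>k. cm k M = cm k N)"
  by (auto simp: cm_def vec_eq_iff fps_eq_iff)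

lemma cm_mult: "cm n (M ** N) = (\<Sum>k\<le>n. cm k M ** cm (n-k) N)"
  unfolding cm_def matrix_matrix_mult_def
  by (simp add: vec_eq_iff fps_sum_nth fps_mult_nth atLeast0AtMost sum_distrib_left sum.swap[of _ UNIV])

lemma cm_mat: "cm k (mat c) = (if k = 0 then mat (fps_nth c 0) else (mat (fps_nth c k)))"
  by (auto simp: cm_def mat_def vec_eq_iff)

lemma cm_mat1: "cm k (mat 1) = (if k = 0 then mat 1 else 0)"
  by (auto simp: cm_def mat_def vec_eq_iff)

lemma cm_diff: "cm k (M - N) = cm k M - cm k N"
  by (auto simp: cm_def vec_eq_iff)

lemma mat_map_mult:
  assumes "\<And>x y. h (x+y) = h x + h y" "h 0 = 0" "\<And>x y. h (x*y) = h x * h y"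
  shows "mat_map h (M ** N) = mat_map h M ** mat_map h N"
proof -
  have hs: "h (sum g A) = (\<Sum>x\<in>A. h (g x))" for g and A :: "'x set"
    by (rule sum_comp_morphism[of h, OF assms(2,1), symmetric, unfolded o_def])
  show ?thesis unfolding mat_map_def matrix_matrix_mult_def
    by (simp add: vec_eq_iff hs assms(3))
qed

lemma mat_map_mat:
  assumes "h 0 = 0"
  shows "mat_map h (mat c) = mat (h c)"
  unfolding mat_map_def mat_def using assms by (simp add: vec_eq_iff)

lemma mat_map_inj:
  assumes "inj h" "mat_map h M = mat_map h N" shows "M = N"
  using assms unfolding mat_map_def by (auto simp: vec_eq_iff inj_eq)

fun binv :: "complex fps^'n^'n \<Rightarrow> nat \<Rightarrow> complex^'n^'n" where
  "binv M 0 = mat 1"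
| "binv M (Suc n) = - (\<Sum>k\<le>n. cm (Suc k) M ** binv M (n - k))"

definition minv :: "complex fps^'n^'n \<Rightarrow> complex fps^'n^'n" where
  "minv M = (\<chi> i j. Abs_fps (\<lambda>n. binv M n $ i $ j))"

lemma cm_minv: "cm n (minv M) = binv M n"
  by (simp add: cm_def minv_def vec_eq_iff)

lemma minv_right:
  assumes "cm 0 M = mat 1"
  shows "M ** minv M = mat 1"
proof -
  have "cm n (M ** minv M) = cm n (mat 1)" for n
  proof (cases n)
    case 0 then show ?thesis using assms by (simp add: cm_mult cm_minv cm_mat1)
  next
    case (Suc m)
    have "cm n (M ** minv M) = (\<Sum>k\<le>Suc m. cm k M ** binv M (Suc m - k))"
      by (simp add: cm_mult cm_minv Suc)
    also have "\<dots> = cm 0 M ** binv M (Suc m) + (\<Sum>k\<le>m. cm (Suc k) M ** binv M (m - k))"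
      by (subst sum.atMost_Suc_shift) simp
    also have "\<dots> = 0" using assms by simp
    finally show ?thesis by (simp add: cm_mat1 Suc)
  qed
  then show ?thesis using cm_eq_iff by blast
qed

lemma fps_to_fls_hom:
  fixes x y :: "complex fps"
  shows "fps_to_fls (x+y) = fps_to_fls x + fps_to_fls y" "fps_to_fls 0 = 0"
  "fps_to_fls (x*y) = fps_to_fls x * fps_to_fls y"
  by (simp_all add: fls_times_fps_to_fls)

lemma inj_fps_to_fls: "inj fps_to_fls"
  by (simp add: inj_def)

lemma minv_left:
  assumes "cm 0 M = mat 1"
  shows "minv M ** M = mat 1"
proof -
  have m1: "mat_map fps_to_fls (mat 1) = mat 1" using mat_map_mat[of fps_to_fls 1] by simp
  have "mat_map fps_to_fls M ** mat_map fps_to_fls (minv M) = mat 1"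
    using minv_right[OF assms] mat_map_mult[OF fps_to_fls_hom, of M "minv M"]
      m1 by metis
  then have "mat_map fps_to_fls (minv M) ** mat_map fps_to_fls M = mat 1"
    using matrix_left_right_inverse by blast
  then have "mat_map fps_to_fls (minv M ** M) = mat_map fps_to_fls (mat 1)"
    using mat_map_mult[OF fps_to_fls_hom, of "minv M" M] m1 by metis
  then show ?thesis using mat_map_inj[OF inj_fps_to_fls] by blast
qed

lemma matrix_inv_eq:
  fixes A :: "'a::semiring_1^'n^'n"
  assumes "A ** B = mat 1" "B ** A = mat 1"
  shows "matrix_inv A = B"
proof -
  have "A ** matrix_inv A = mat 1 \<and> matrix_inv A ** A = mat 1"
    unfolding matrix_inv_def by (rule someI[of _ B]) (use assms in blast)
  then have "matrix_inv A = matrix_inv A ** (A ** B)" using assms by simp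
  also have "\<dots> = B" using \<open>_ \<and> _\<close> by (simp add: matrix_mul_assoc)
  finally show ?thesis .
qed

lemma fps_scale_hom:
  fixes x y :: "complex fps"
  shows "fps_scale c (x+y) = fps_scale c x + fps_scale c y" "fps_scale c 0 = 0"
  "fps_scale c (x*y) = fps_scale c x * fps_scale c y"
    apply (simp_all add: fps_scale_def fps_eq_iff algebra_simps fps_mult_nth sum_distrib_left)
  apply (intro allI sum.cong, simp)
  subgoal for n i
    using power_add[of c i "n-i"] by (simp add: mult_ac)
  done


lemma I_plus_cm:
  assumes "in_I_plus_zR R C" "k < R"
  shows "cm k C = cm k (mat 1)"
proof -
  have "cm k (C - mat 1) = 0" using assms unfolding in_I_plus_zR_def cm_def
    by (simp add: vec_eq_iff)
  then show ?thesis by (simp add: cm_diff)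
qed

lemma cm_scale: "cm n (mat_map (fps_scale c) M) = (\<chi> i j. c^n * cm n M $ i $ j)"
  by (simp add: cm_def mat_map_def fps_scale_def)

lemma cm_K_right: "cm n (X ** mat_map fps_const A) = cm n X ** A"
  by (simp add: cm_def mat_map_def matrix_matrix_mult_def vec_eq_iff fps_sum_nth)

lemma cm_K_left: "cm n (mat_map fps_const A ** X) = A ** cm n X"
  by (simp add: cm_def mat_map_def matrix_matrix_mult_def vec_eq_iff fps_sum_nth)

lemma scale_K: "mat_map (fps_scale c) (mat_map fps_const A) = mat_map fps_const A"
  by (simp add: mat_map_def fps_scale_def vec_eq_iff fps_eq_iff)

lemma K_to_fls: "mat_map fls_const A = mat_map fps_to_fls (mat_map fps_const A)"
  by (simp add: mat_map_def)

lemma S_to_fls: "mat_map (\<lambda>f. fps_to_fls (fps_scale c f)) C = mat_map fps_to_fls (mat_map (fps_scale c) C)"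
  by (simp add: mat_map_def)


lemma A_from_hyp:
  fixes A :: "complex fls^'n^'n"
  assumes C0: "cm 0 C = mat 1"
    and h: "mat_map fls_const A0 =
           matrix_inv (mat_map (\<lambda>f. fps_to_fls (fps_scale c f)) C)
             ** A ** mat_map fps_to_fls C"
  shows "A = mat_map fps_to_fls (mat_map (fps_scale c) C ** mat_map fps_const A0 ** minv C)"
proof -
  let ?T = "mat_map fps_to_fls" and ?S = "mat_map (fps_scale c)"
  have Tm: "?T (X ** Y) = ?T X ** ?T Y" for X Y :: "complex fps^'n^'n"
    by (rule mat_map_mult[OF fps_to_fls_hom])
  have Sm: "?S (X ** Y) = ?S X ** ?S Y" for X Y :: "complex fps^'n^'n"
    by (rule mat_map_mult[OF fps_scale_hom])
  have T1: "?T (mat 1) = mat 1" using mat_map_mat[of fps_to_fls 1] by simp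
  have "fps_scale c 1 = 1" by (auto simp: fps_scale_def fps_eq_iff)
  then have S1: "?S (mat 1) = mat 1" using mat_map_mat[of "fps_scale c" 1]
    by (simp add: fps_scale_hom)
  have r: "C ** minv C = mat 1" "minv C ** C = mat 1" using minv_right[OF C0] minv_left[OF C0] by auto
  have sr: "?S C ** ?S (minv C) = mat 1" "?S (minv C) ** ?S C = mat 1"
    using Sm r S1 by metis+
  have inv: "matrix_inv (?T (?S C)) = ?T (?S (minv C))"
    by (rule matrix_inv_eq) (use Tm sr T1 in metis)+
  have h': "?T (mat_map fps_const A0) = ?T (?S (minv C)) ** A ** ?T C"
    using h inv by (simp add: S_to_fls K_to_fls)
  have "?T (?S C ** mat_map fps_const A0 ** minv C)
      = ?T (?S C) ** (?T (?S (minv C)) ** A ** ?T C) ** ?T (minv C)"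
    by (simp add: Tm h')
  also have "\<dots> = (?T (?S C) ** ?T (?S (minv C))) ** A ** (?T C ** ?T (minv C))"
    by (simp add: matrix_mul_assoc)
  also have "\<dots> = A" by (metis Tm sr r T1 matrix_mul_lid matrix_mul_rid)
  finally show ?thesis by simp
qed


lemma matrix_inv_props:
  fixes A :: "'a::semiring_1^'n^'n"
  assumes "invertible A"
  shows "A ** matrix_inv A = mat 1" "matrix_inv A ** A = mat 1"
  using someI_ex[OF assms[unfolded invertible_def]] unfolding matrix_inv_def by auto

lemma smul_right: "M ** (\<chi> i j. a * N $ i $ j) = (\<chi> i j. a * (M ** N) $ i $ j)"
  for M N :: "'a::comm_semiring_1^'n^'n"
  by (simp add: matrix_matrix_mult_def vec_eq_iff sum_distrib_left mult_ac)

lemma smul_left: "(\<chi> i j. a * N $ i $ j) ** M = (\<chi> i j. a * (N ** M) $ i $ j)"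
  for M N :: "'a::comm_semiring_1^'n^'n"
  by (simp add: matrix_matrix_mult_def vec_eq_iff sum_distrib_left mult_ac)

lemma part12:
  fixes p R :: nat
    and A :: "complex fls^'n^'n"
    and C C' :: "complex fps^'n^'n"
    and A0 A0' :: "complex^'n^'n"
  assumes "p \<ge> 2" and "R \<ge> 1"
    and "in_I_plus_zR R C" and "in_I_plus_zR R C'"
    and "invertible A0"
    and h: "mat_map fls_const A0 =
           matrix_inv (mat_map (\<lambda>f. fps_to_fls (fps_scale (1 / of_nat p) f)) C)
             ** A ** mat_map fps_to_fls C"
    and h': "mat_map fls_const A0' =
           matrix_inv (mat_map (\<lambda>f. fps_to_fls (fps_scale (1 / of_nat p) f)) C')
             ** A ** mat_map fps_to_fls C'"
  shows "A0 = A0'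
    \<and> ((\<forall>i\<ge>R. \<not> conj_map_eigenvalue A0 (of_nat p ^ i)) \<longrightarrow> C = C')"
proof -
  define c :: complex where "c = 1 / of_nat p"
  let ?T = "mat_map fps_to_fls" and ?S = "mat_map (fps_scale c)"
  let ?K = "mat_map fps_const"
  have Sm: "?S (X ** Y) = ?S X ** ?S Y" for X Y :: "complex fps^'n^'n"
    by (rule mat_map_mult[OF fps_scale_hom])
  have "fps_scale c 1 = 1" by (auto simp: fps_scale_def fps_eq_iff)
  then have S1: "?S (mat 1) = mat 1" using mat_map_mat[of "fps_scale c" 1]
    by (simp add: fps_scale_hom)
  have C0: "cm 0 C = mat 1" using I_plus_cm[OF assms(3), of 0] assms(2) by (simp add: cm_mat1)
  have C0': "cm 0 C' = mat 1" using I_plus_cm[OF assms(4), of 0] assms(2) by (simp add: cm_mat1)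
  have r: "C ** minv C = mat 1" "minv C ** C = mat 1" using minv_right[OF C0] minv_left[OF C0] by auto
  have r': "C' ** minv C' = mat 1" "minv C' ** C' = mat 1" using minv_right[OF C0'] minv_left[OF C0'] by auto
  have "?T (?S C ** ?K A0 ** minv C) = ?T (?S C' ** ?K A0' ** minv C')"
    using A_from_hyp[OF C0 h[folded c_def]] A_from_hyp[OF C0' h'[folded c_def]] by simp
  then have E: "?S C ** ?K A0 ** minv C = ?S C' ** ?K A0' ** minv C'"
    using mat_map_inj[OF inj_fps_to_fls] by blast
  define D where "D = minv C' ** C"
  have key: "?S D ** ?K A0 = ?K A0' ** D"
  proof -
    have "?S D ** ?K A0 = ?S (minv C') ** (?S C ** ?K A0 ** minv C) ** C"
      by (simp add: D_def Sm matrix_mul_assoc[symmetric] r)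
    also have "\<dots> = (?S (minv C') ** ?S C') ** ?K A0' ** (minv C' ** C)"
      by (simp add: E matrix_mul_assoc)
    also have "\<dots> = ?K A0' ** D" by (simp add: Sm[symmetric] r' S1 D_def)
    finally show ?thesis .
  qed
  have coef: "(\<chi> i j. c^n * cm n D $ i $ j) ** A0 = A0' ** cm n D" for n
    using arg_cong[OF key, of "cm n"] by (simp add: cm_K_right cm_K_left cm_scale)
  have D0: "cm 0 D = mat 1"
    by (simp add: D_def cm_mult cm_minv C0)
  have eqA: "A0 = A0'" using coef[of 0] by (simp add: D0)
  have CD: "C' ** D = C" by (simp add: D_def matrix_mul_assoc r')
  have Dlow: "cm n D = 0" if "0 < n" "n < R" for n
  proof -
    obtain m where m: "n = Suc m" using \<open>0 < n\<close> gr0_implies_Suc by blast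
    have z: "cm (Suc k) C' = 0" if "k \<le> m" for k
      using I_plus_cm[OF assms(4), of "Suc k"] that m \<open>n < R\<close> by (simp add: cm_mat1)
    have "cm n C = cm n (C' ** D)" by (simp add: CD)
    also have "\<dots> = cm 0 C' ** cm n D + (\<Sum>k\<le>m. cm (Suc k) C' ** cm (m - k) D)"
      unfolding cm_mult m by (subst sum.atMost_Suc_shift) simp
    also have "\<dots> = cm n D" using z by (simp add: C0')
    finally show ?thesis using I_plus_cm[OF assms(3), of n] that by (simp add: cm_mat1)
  qed
  have "C = C'" if hyp: "\<forall>i\<ge>R. \<not> conj_map_eigenvalue A0 (of_nat p ^ i)"
  proof -
    have Dhigh: "cm n D = 0" if "n \<ge> R" for n
    proof (rule ccontr)
      assume nz: "cm n D \<noteq> 0"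
      let ?X = "cm n D"
      have pc: "of_nat p ^ n * c ^ n = 1" using assms(1) by (simp add: c_def power_mult_distrib[symmetric])
      have "?X ** A0 = (\<chi> i j. of_nat p ^ n * (A0 ** ?X) $ i $ j)"
        using arg_cong[OF coef[of n], of "\<lambda>M. (\<chi> i j. of_nat p ^ n * M $ i $ j)"]
        by (simp add: smul_left eqA vec_eq_iff mult.assoc[symmetric] pc)
      then have "matrix_inv A0 ** ?X ** A0 = (\<chi> i j. of_nat p ^ n * ?X $ i $ j)"
        by (simp add: matrix_mul_assoc[symmetric] smul_right matrix_mul_assoc matrix_inv_props[OF assms(5)])
      then have "conj_map_eigenvalue A0 (of_nat p ^ n)"
        unfolding conj_map_eigenvalue_def using nz by blast
      then show False using hyp that by blast
    qed
    have "cm n D = cm n (mat 1)" for n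
      using D0 Dlow[of n] Dhigh[of n] by (cases "n = 0"; cases "n < R") (auto simp: cm_mat1)
    then have "D = mat 1" using cm_eq_iff by blast
    then show ?thesis using CD by simp
  qed
  then show ?thesis using eqA by blast
qed



definition pmat :: "complex poly \<Rightarrow> complex^'n^'n \<Rightarrow> complex^'n^'n" where
  "pmat g M = foldr (\<lambda>a acc. mat a + M ** acc) (coeffs g) 0"

lemma pmat_0[simp]: "pmat 0 M = 0" by (simp add: pmat_def)

lemma pmat_pCons: "pmat (pCons a g) M = mat a + M ** pmat g M"
  by (auto simp: pmat_def cCons_def)

lemma mat_add: "mat (a + b) = (mat a + mat b :: 'a::monoid_add^'n^'n)"
  by (simp add: mat_def vec_eq_iff)

lemma mat_mult_left: "mat a ** V = (\<chi> i j. a * V $ i $ j)" for V :: "'a::semiring_1^'n^'n"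
  by (simp add: mat_def matrix_matrix_mult_def vec_eq_iff if_distrib if_distribR sum.delta cong: if_cong)

lemma mat_mult_right: "V ** mat a = (\<chi> i j. a * V $ i $ j)" for V :: "'a::comm_semiring_1^'n^'n"
  by (simp add: mat_def matrix_matrix_mult_def vec_eq_iff if_distrib if_distribR sum.delta' mult.commute cong: if_cong)

lemma mat_comm: "mat a ** V = V ** mat a" for V :: "'a::comm_semiring_1^'n^'n"
  by (simp add: mat_mult_left mat_mult_right)

lemma matrix_add_rdistrib': "(B + C) ** A = B ** A + C ** A" for A B C :: "'a::semiring_1^'n^'n"
  by (simp add: matrix_matrix_mult_def vec_eq_iff sum.distrib distrib_right)

lemma matrix_sub_rdistrib': "(B - C) ** A = B ** A - C ** A" for A B C :: "'a::ring_1^'n^'n"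
  by (simp add: matrix_matrix_mult_def vec_eq_iff sum_subtractf left_diff_distrib)

lemma pmat_add: "pmat (f + g) M = pmat f M + pmat g M"
proof (induction f arbitrary: g)
  case 0 then show ?case by simp
next
  case (pCons a f)
  obtain b q where g: "g = pCons b q" by (cases g) auto
  show ?case using pCons.IH[of q]
    by (simp add: g pmat_pCons mat_add matrix_add_ldistrib algebra_simps)
qed

lemma pmat_smult: "pmat (smult a f) M = mat a ** pmat f M"
proof (induction f)
  case 0 then show ?case by simp
next
  case (pCons b f)
  have 1: "mat a ** (M ** pmat f M) = M ** (mat a ** pmat f M)"
    by (metis matrix_mul_assoc mat_comm)
  have 2: "mat a ** mat b = (mat (a*b) :: complex^'n^'n)"
    unfolding mat_mult_left by (simp add: mat_def vec_eq_iff)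
  show ?case using pCons.IH
    by (simp add: pmat_pCons matrix_add_ldistrib 1 2)
qed

lemma pmat_const: "pmat [:a:] M = mat a" by (simp add: pmat_pCons)

lemma pmat_linear: "pmat ([:-r, 1:] * h) M = (M - mat r) ** pmat h M"
proof -
  have "[:-r, 1:] * h = smult (-r) h + pCons 0 h" by simp
  then have "pmat ([:-r, 1:] * h) M = mat (-r) ** pmat h M + M ** pmat h M"
    by (simp only: pmat_add pmat_smult pmat_pCons) simp
  also have "\<dots> = (M - mat r) ** pmat h M"
    by (simp add: matrix_sub_rdistrib' mat_mult_left vec_eq_iff)
  finally show ?thesis .
qed

lemma pmat_intertwine:
  fixes X A B :: "complex^'n^'n"
  assumes "X ** A = B ** X"
  shows "X ** pmat f A = pmat f B ** X"
proof (induction f)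
  case 0 then show ?case by simp
next
  case (pCons a f)
  have "X ** (A ** pmat f A) = B ** (pmat f B ** X)"
    by (metis assms matrix_mul_assoc pCons.IH)
  moreover have "X ** mat a = mat a ** X" using mat_comm[of a X] by simp
  ultimately show ?case
    by (simp add: pmat_pCons matrix_add_ldistrib matrix_add_rdistrib' matrix_mul_assoc)
qed


lemma peel:
  fixes M X :: "complex^'n^'n"
  assumes "g \<noteq> 0" "\<And>r (Y::complex^'n^'n). poly g r = 0 \<Longrightarrow> (M - mat r) ** Y = 0 \<Longrightarrow> Y = 0"
    "pmat g M ** X = 0"
  shows "X = 0"
  using assms
proof (induction "degree g" arbitrary: g X rule: less_induct)
  case less
  show ?case
  proof (cases "degree g = 0")
    case True
    then obtain a where g: "g = [:a:]" by (meson degree_eq_zeroE)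
    with less.prems have a: "a \<noteq> 0" by simp
    have "mat a ** X = 0" using less.prems(3) by (simp add: g pmat_const)
    then have "mat (1/a) ** (mat a ** X) = 0" by simp
    then show ?thesis using a unfolding mat_mult_left by (simp add: vec_eq_iff)
  next
    case False
    then obtain r where r: "poly g r = 0"
      using fundamental_theorem_of_algebra[of g] constant_degree[of g] by auto
    then obtain h where g: "g = [:-r, 1:] * h" using poly_eq_0_iff_dvd by (meson dvdE)
    have h0: "h \<noteq> 0" using less.prems(1) g by auto
    have dg: "degree g = Suc (degree h)"
      using g h0 degree_mult_eq[of "[:-r, 1:]" h] by (simp del: mult_pCons_left)
    have "(M - mat r) ** (pmat h M ** X) = 0"
      using less.prems(3) unfolding g pmat_linear by (simp add: matrix_mul_assoc)
    then have hX: "pmat h M ** X = 0" using less.prems(2)[OF r] by blast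
    show ?thesis
      by (rule less.hyps[of h X]) (use dg h0 hX less.prems(2) g in auto)
  qed
qed

fun mpow :: "complex^'n^'n \<Rightarrow> nat \<Rightarrow> complex^'n^'n" where
  "mpow M 0 = mat 1"
| "mpow M (Suc k) = M ** mpow M k"

lemma pmat_monom: "pmat (monom a k) M = mat a ** mpow M k"
proof (induction k)
  case 0 then show ?case by (simp add: monom_0 pmat_const)
next
  case (Suc k)
  then show ?case by (simp add: monom_Suc pmat_pCons) (metis matrix_mul_assoc mat_comm)
qed

lemma pmat_sum: "pmat (\<Sum>k\<in>S. f k) M = (\<Sum>k\<in>S. pmat (f k) M)"
  using sum_comp_morphism[of "\<lambda>g. pmat g M" f S] by (simp add: pmat_add o_def)

lemma mat_of_real: "mat (complex_of_real t) ** V = t *\<^sub>R V" for V :: "complex^'n^'n"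
proof -
  have "(t *\<^sub>R V) $ i $ j = complex_of_real t * V $ i $ j" for i j
    by (simp only: vector_scaleR_component) (simp add: scaleR_conv_of_real)
  then show ?thesis unfolding mat_mult_left by (simp add: vec_eq_iff)
qed

lemma annih: "\<exists>f. f \<noteq> 0 \<and> pmat f (M::complex^'n^'n) = 0"
proof (cases "inj_on (mpow M) {..DIM(complex^'n^'n)}")
  case True
  define N where "N = DIM(complex^'n^'n)"
  define S where "S = mpow M ` {..N}"
  have fS: "finite S" by (simp add: S_def)
  have cS: "card S = Suc N" using True by (simp add: S_def N_def card_image)
  have "\<not> independent S" using independent_bound[of S] cS N_def by auto
  then obtain u where u: "\<exists>v\<in>S. u v \<noteq> 0" "(\<Sum>v\<in>S. u v *\<^sub>R v) = 0"
    using real_vector.dependent_finite[OF fS] by blast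
  define f where "f = (\<Sum>k\<le>N. monom (complex_of_real (u (mpow M k))) k)"
  have "pmat f M = (\<Sum>k\<le>N. u (mpow M k) *\<^sub>R mpow M k)"
    by (simp add: f_def pmat_sum pmat_monom mat_of_real)
  also have "\<dots> = (\<Sum>v\<in>S. u v *\<^sub>R v)"
    unfolding S_def using True N_def by (simp add: sum.reindex)
  finally have z: "pmat f M = 0" using u by simp
  obtain k0 where k0: "k0 \<le> N" "u (mpow M k0) \<noteq> 0" using u(1) S_def by auto
  have "coeff f k0 = complex_of_real (u (mpow M k0))"
    using k0(1) by (simp add: f_def coeff_sum coeff_monom)
  then have "f \<noteq> 0" using k0 by auto
  then show ?thesis using z by blast
next
  case False
  then obtain a b where ab: "a \<noteq> b" "mpow M a = mpow M b" by (auto simp: inj_on_def)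
  define f :: "complex poly" where "f = monom 1 a + smult (-1) (monom 1 b)"
  have "pmat f M = 0" unfolding f_def pmat_add pmat_smult pmat_monom ab
    by (simp add: mat_mult_left vec_eq_iff)
  moreover have "coeff f a = 1" using ab by (simp add: f_def coeff_monom)
  ultimately show ?thesis by (metis coeff_0 zero_neq_one)
qed

lemma eig_of_kernel:
  fixes M Y :: "complex^'n^'n"
  assumes "(M - mat s) ** Y = 0" "Y \<noteq> 0"
  shows "mat_eigenvalue M s"
proof -
  obtain i j where ij: "Y $ i $ j \<noteq> 0" using assms(2) by (auto simp: vec_eq_iff)
  define v where "v = (\<chi> k. Y $ k $ j)"
  have v0: "v \<noteq> 0" using ij by (auto simp: v_def vec_eq_iff)
  have "(M - mat s) *v v = 0"
    using arg_cong[OF assms(1), of "\<lambda>Z. \<chi> k. Z $ k $ j"]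
    by (simp add: v_def matrix_vector_mult_def matrix_matrix_mult_def vec_eq_iff)
  moreover have "mat s *v v = s *s v"
    by (simp add: mat_def matrix_vector_mult_def vec_eq_iff if_distrib if_distribR sum.delta cong: if_cong)
  ultimately have "M *v v = s *s v" by (simp add: matrix_vector_mult_diff_rdistrib)
  then show ?thesis unfolding mat_eigenvalue_def using v0 by blast
qed


lemma part3:
  fixes A0 :: "complex^'n^'n" and p i :: nat
  assumes inv: "invertible A0" and pr: "p_restricted p A0" and "p \<ge> 1" and "i \<ge> 1"
  shows "\<not> conj_map_eigenvalue A0 (of_nat p ^ i)"
proof
  define c :: complex where "c = of_nat p ^ i"
  assume "conj_map_eigenvalue A0 (of_nat p ^ i)"
  then obtain X :: "complex^'n^'n" where X: "X \<noteq> 0" "matrix_inv A0 ** X ** A0 = (\<chi> i j. c * X $ i $ j)"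
    unfolding conj_map_eigenvalue_def c_def by blast
  define B where "B = mat c ** A0"
  have c0: "c \<noteq> 0" using assms(3) by (simp add: c_def)
  have "real p ^ 1 \<le> real p ^ i" by (rule power_increasing) (use assms(3,4) in auto)
  then have cabs: "cmod c \<ge> real p" unfolding c_def norm_power norm_of_nat by simp
  have XA: "X ** A0 = B ** X"
  proof -
    have "X ** A0 = A0 ** (matrix_inv A0 ** X ** A0)"
      by (simp add: matrix_mul_assoc matrix_inv_props[OF inv])
    also have "\<dots> = mat c ** (A0 ** X)" by (simp add: X(2) smul_right mat_mult_left)
    finally show ?thesis by (simp add: B_def matrix_mul_assoc)
  qed
  obtain f where f: "f \<noteq> 0 \<and> pmat f A0 = 0"
    and fmin: "\<And>g. g \<noteq> 0 \<and> pmat g A0 = 0 \<Longrightarrow> degree f \<le> degree g"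
    using ex_has_least_nat[of "\<lambda>f. f \<noteq> 0 \<and> pmat f A0 = 0" _ degree] annih[of A0] by metis
  have roots: "mat_eigenvalue A0 r" if r0: "poly f r = 0" for r
  proof -
    obtain h where g: "f = [:-r, 1:] * h" using r0 poly_eq_0_iff_dvd by (meson dvdE)
    have h0: "h \<noteq> 0" using f g by auto
    have dg: "degree f = Suc (degree h)"
      using g h0 degree_mult_eq[of "[:-r, 1:]" h] by (simp del: mult_pCons_left)
    have "pmat h A0 \<noteq> 0" using fmin[of h] h0 dg by auto
    moreover have "(A0 - mat r) ** pmat h A0 = 0" using f unfolding g pmat_linear by simp
    ultimately show ?thesis using eig_of_kernel by blast
  qed
  have "X ** pmat f A0 = pmat f B ** X" by (rule pmat_intertwine[OF XA])
  then have fBX: "pmat f B ** X = 0" using f by simp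
  have inj: "Y = 0" if r: "poly f r = 0" and Y: "(B - mat r) ** Y = 0" for r and Y :: "complex^'n^'n"
  proof (rule ccontr)
    assume Y0: "Y \<noteq> 0"
    have e1: "1 \<le> cmod r" "cmod r < real p" using roots[OF r] pr unfolding p_restricted_def by auto
    have "B - mat r = mat c ** (A0 - mat (r / c))"
      using c0 unfolding B_def mat_mult_left by (auto simp: vec_eq_iff mat_def right_diff_distrib)
    then have "mat c ** ((A0 - mat (r / c)) ** Y) = 0" using Y by (simp add: matrix_mul_assoc)
    then have "mat (1/c) ** (mat c ** ((A0 - mat (r / c)) ** Y)) = 0" by simp
    then have "(A0 - mat (r / c)) ** Y = 0" using c0 unfolding mat_mult_left by (simp add: vec_eq_iff)
    then have "mat_eigenvalue A0 (r / c)" using eig_of_kernel Y0 by blast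
    then have "1 \<le> cmod (r / c)" using pr unfolding p_restricted_def by auto
    moreover have "cmod (r / c) < 1"
      using e1 cabs c0 by (simp add: norm_divide divide_less_eq)
    ultimately show False by simp
  qed
  have "X = 0" by (rule peel[OF conjunct1[OF f] _ fBX]) (use inj in blast)
  with X show False by simp
qed



theorem lemma5p1:
  fixes p R :: nat
    and A :: "complex fls^'n^'n"
    and C C' :: "complex fps^'n^'n"
    and A0 A0' :: "complex^'n^'n"
  assumes "p \<ge> 2" and "R \<ge> 1"
    and "invertible A"
    and "in_I_plus_zR R C" and "in_I_plus_zR R C'"
    and "invertible A0" and "invertible A0'"
    and "mat_map fls_const A0 =
           matrix_inv (mat_map (\<lambda>f. fps_to_fls (fps_scale (1 / of_nat p) f)) C)
             ** A ** mat_map fps_to_fls C"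
    and "mat_map fls_const A0' =
           matrix_inv (mat_map (\<lambda>f. fps_to_fls (fps_scale (1 / of_nat p) f)) C')
             ** A ** mat_map fps_to_fls C'"
  shows "A0 = A0'
    \<and> ((\<forall>i\<ge>R. \<not> conj_map_eigenvalue A0 (of_nat p ^ i)) \<longrightarrow> C = C')
    \<and> (p_restricted p A0 \<longrightarrow> (\<forall>i\<ge>1. \<not> conj_map_eigenvalue A0 (of_nat p ^ i)))"
proof -
  have "A0 = A0' \<and> ((\<forall>i\<ge>R. \<not> conj_map_eigenvalue A0 (of_nat p ^ i)) \<longrightarrow> C = C')"
    by (rule part12[OF assms(1,2,4,5,6,8,9)])
  moreover have "p_restricted p A0 \<longrightarrow> (\<forall>i\<ge>1. \<not> conj_map_eigenvalue A0 (of_nat p ^ i))"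
    using part3[OF assms(6)] assms(1) by auto
  ultimately show ?thesis by blast
qed

end
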